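(* Let $f$ be a real function differentiable on the interval $a\le x\le b$, and let $m,k\in\mathbb{R}$. Then the area of the surface of revolution in $\mathbb{R}^3$ obtained by revolving the graph of $y=f(x)$, $a\le x\le b$, about the line $y=m\,x+k$ is given by $$2\pi\int_a^b \bigl|f(x)-m\,x-k\bigr|\,\sqrt{\frac{1+\bigl[f'(x)\bigr]^2}{1+m^2}}\,dx.$$
   Context: The plane $\mathbb{R}^2$ is regarded as sitting inside $\mathbb{R}^3$, and the surface of revolution is the surface swept out when the graph is rotated through a full turn about the given line (viewed as an axis in $\mathbb{R}^3$). *)

theory Defs
  imports "HOL-Analysis.Analysis"
begin

definition plane_pt :: "real \<Rightarrow> real \<Rightarrow> real^3" where
  "plane_pt x y = vector [x, y, 0]"

text \<open>Rotation by angle t of the point q about the axis through p0 with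
  unit direction u (Rodrigues' rotation formula).\<close>
definition rotate_about :: "real^3 \<Rightarrow> real^3 \<Rightarrow> real \<Rightarrow> real^3 \<Rightarrow> real^3" where
  "rotate_about p0 u t q =
     p0 + cos t *\<^sub>R (q - p0) + sin t *\<^sub>R cross3 u (q - p0)
        + ((1 - cos t) * (u \<bullet> (q - p0))) *\<^sub>R u"

text \<open>The axis y = m x + k of the plane, as a line in R^3: base point and unit direction.\<close>
definition line_point :: "real \<Rightarrow> real \<Rightarrow> real^3" where
  "line_point m k = plane_pt 0 k"

definition line_dir :: "real \<Rightarrow> real^3" where
  "line_dir m = (1 / sqrt (1 + m\<^sup>2)) *\<^sub>R plane_pt 1 m"

definition revolution_surface ::
  "(real \<Rightarrow> real) \<Rightarrow> real \<Rightarrow> real \<Rightarrow> real \<Rightarrow> real \<Rightarrow> real^3" where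
  "revolution_surface f m k x t =
     rotate_about (line_point m k) (line_dir m) t (plane_pt x (f x))"

definition param_surface_area ::
  "(real \<Rightarrow> real \<Rightarrow> real^3) \<Rightarrow> real \<Rightarrow> real \<Rightarrow> real \<Rightarrow> real \<Rightarrow> real" where
  "param_surface_area phi a b c d =
     integral ({a..b} \<times> {c..d})
       (\<lambda>(s, t). norm (cross3
          (vector_derivative (\<lambda>s'. phi s' t) (at s within {a..b}))
          (vector_derivative (\<lambda>t'. phi s t') (at t within {c..d}))))"

end

theory Submission
  imports Defs
begin


definition E1 :: "real^3" where "E1 = vector [1,0,0]"
definition E2 :: "real^3" where "E2 = vector [0,1,0]"
definition E3 :: "real^3" where "E3 = vector [0,0,1]"

lemma rs_eq:
  "revolution_surface f m k x t =
    (cos t * x + (1 - cos t) * (x + m * (f x - k)) / (1 + m\<^sup>2)) *\<^sub>R E1 +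
    (k + cos t * (f x - k) + m * (1 - cos t) * (x + m * (f x - k)) / (1 + m\<^sup>2)) *\<^sub>R E2 +
    (sin t * (f x - k - m * x) / sqrt (1 + m\<^sup>2)) *\<^sub>R E3"
proof -
  have r: "sqrt (1 + m\<^sup>2) ^ 2 = 1 + m\<^sup>2" by simp
  have r0: "sqrt (1 + m\<^sup>2) \<noteq> 0" by (smt (verit) real_sqrt_gt_zero zero_le_power2)
  show ?thesis
  unfolding revolution_surface_def rotate_about_def line_point_def line_dir_def plane_pt_def E1_def E2_def E3_def
  apply (simp add: vec_eq_iff forall_3 cross3_simps inner_vec_def sum_3)
  using r r0 by (auto simp: field_simps power2_eq_square)
qed


lemma vd3:
  assumes "(a has_real_derivative a') (at x within S)" "(b has_real_derivative b') (at x within S)"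
    "(c has_real_derivative c') (at x within S)"
  shows "((\<lambda>x. a x *\<^sub>R E1 + b x *\<^sub>R E2 + c x *\<^sub>R E3) has_vector_derivative (a' *\<^sub>R E1 + b' *\<^sub>R E2 + c' *\<^sub>R E3)) (at x within S)"
  using assms by (auto intro!: derivative_eq_intros)

lemma cross_E:
  "cross3 (a1 *\<^sub>R E1 + a2 *\<^sub>R E2 + a3 *\<^sub>R E3) (b1 *\<^sub>R E1 + b2 *\<^sub>R E2 + b3 *\<^sub>R E3) =
    (a2*b3 - a3*b2) *\<^sub>R E1 + (a3*b1 - a1*b3) *\<^sub>R E2 + (a1*b2 - a2*b1) *\<^sub>R E3"
  unfolding E1_def E2_def E3_def by (simp add: vec_eq_iff forall_3 cross3_simps)

lemma norm_E: "norm (a1 *\<^sub>R E1 + a2 *\<^sub>R E2 + a3 *\<^sub>R E3) = sqrt (a1^2 + a2^2 + a3^2)"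
  unfolding E1_def E2_def E3_def norm_eq_sqrt_inner by (simp add: inner_vec_def sum_3 power2_eq_square)

lemma key_alg:
  fixes x Y p m c s r :: real
  assumes cs: "c^2 + s^2 = 1" and r: "r^2 = 1 + m^2" "r > 0"
  defines "q \<equiv> 1 + m^2"
  defines "a1 \<equiv> c + (1 - c) * (1 + m * p) / q"
      and "a2 \<equiv> c * p + m * (1 - c) * (1 + m * p) / q"
      and "a3 \<equiv> s * (p - m) / r"
      and "b1 \<equiv> - s * x + s * (x + m * Y) / q"
      and "b2 \<equiv> - s * Y + m * s * (x + m * Y) / q"
      and "b3 \<equiv> c * (Y - m * x) / r"
  shows "(a2*b3 - a3*b2)^2 + (a3*b1 - a1*b3)^2 + (a1*b2 - a2*b1)^2 = (Y - m*x)^2 * (1 + p^2) / q"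
proof -
  have q: "q > 0" unfolding q_def by (smt (verit) zero_le_power2)
  have rq: "r^2 = q" using r q_def by simp
  have s2: "s^2 = 1 - c^2" using cs by simp
  have s2': "s * s = 1 - c * c" using cs by (simp add: power2_eq_square)
  define d where "d = p - m"
  define \<alpha> where "\<alpha> = Y - m * x"
  have A1: "a1 = (1 + m*p - c*m*d) / q" unfolding a1_def d_def q_def using q q_def
    by (simp add: field_simps) (simp add: algebra_simps power2_eq_square)
  have A2: "a2 = (m*(1 + m*p) + c*d) / q" unfolding a2_def d_def q_def using q q_def
    by (simp add: field_simps) (simp add: algebra_simps power2_eq_square)
  have A3: "a3 = s * d / r" unfolding a3_def d_def ..
  have B1: "b1 = s*m*\<alpha> / q" unfolding b1_def \<alpha>_def q_def using q q_def
    by (simp add: field_simps) (simp add: algebra_simps power2_eq_square)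
  have B2: "b2 = - s*\<alpha> / q" unfolding b2_def \<alpha>_def q_def using q q_def
    by (simp add: field_simps) (simp add: algebra_simps power2_eq_square)
  have B3: "b3 = c*\<alpha> / r" unfolding b3_def \<alpha>_def ..
  have C1: "a2*b3 - a3*b2 = \<alpha> * (c*m*(1+m*p) + d) / (q*r)"
    unfolding A2 A3 B2 B3 using q r s2 by (simp add: field_simps) (simp add: algebra_simps power2_eq_square s2')
  have C2: "a3*b1 - a1*b3 = \<alpha> * (m*d - c*(1+m*p)) / (q*r)"
    unfolding A1 A3 B1 B3 using q r s2 by (simp add: field_simps) (simp add: algebra_simps power2_eq_square s2')
  have C3: "a1*b2 - a2*b1 = - s*\<alpha>*(1+m*p) / q"
  proof -
    have eq: "(1+m*p - c*m*d) + m*(m*(1+m*p) + c*d) = (1+m*p)*q"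
      unfolding q_def by (simp add: algebra_simps power2_eq_square)
    have "a1*b2 - a2*b1 = -(s*\<alpha>/q^2) * ((1+m*p - c*m*d) + m*(m*(1+m*p) + c*d))"
      unfolding A1 A2 B1 B2 using q by (simp add: field_simps power2_eq_square)
    also have "\<dots> = - s*\<alpha>*(1+m*p) / q" unfolding eq using q by (simp add: field_simps power2_eq_square)
    finally show ?thesis .
  qed
  have "(a2*b3 - a3*b2)^2 + (a3*b1 - a1*b3)^2 = \<alpha>^2 * (c^2*(1+m*p)^2 + d^2) / q^2"
  proof -
    define X where "X = c*m*(1+m*p) + d"
    define Z where "Z = m*d - c*(1+m*p)"
    have XZ: "X^2 + Z^2 = q*(c^2*(1+m*p)^2 + d^2)"
      unfolding X_def Z_def q_def by (simp add: algebra_simps power2_eq_square)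
    have "(a2*b3 - a3*b2)^2 + (a3*b1 - a1*b3)^2 = \<alpha>^2*(X^2+Z^2)/(q*r)^2"
      unfolding C1 C2 X_def[symmetric] Z_def[symmetric]
      by (simp add: power_divide power_mult_distrib add_divide_distrib distrib_left)
    also have "(q*r)^2 = q^3" using rq by (simp add: power_mult_distrib power3_eq_cube power2_eq_square)
    also have "\<alpha>^2*(X^2+Z^2)/q^3 = \<alpha>^2 * (c^2*(1+m*p)^2 + d^2) / q^2"
      unfolding XZ using q by (simp add: power3_eq_cube power2_eq_square)
    finally show ?thesis .
  qed
  moreover have "(a1*b2 - a2*b1)^2 = \<alpha>^2 * (s^2*(1+m*p)^2) / q^2"
    unfolding C3 by (simp add: power_divide) (simp add: algebra_simps power2_eq_square)
  ultimately have "(a2*b3 - a3*b2)^2 + (a3*b1 - a1*b3)^2 + (a1*b2 - a2*b1)^2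
     = \<alpha>^2 * ((c^2 + s^2)*(1+m*p)^2 + d^2) / q^2"
    by (simp add: add_divide_distrib[symmetric] algebra_simps)
  also have "\<dots> = \<alpha>^2 * (1 + p^2) / q"
    using cs q unfolding d_def q_def by (simp add: field_simps) (simp add: algebra_simps power2_eq_square)
  finally show ?thesis unfolding \<alpha>_def .
qed


lemma integrand:
  assumes fd0: "f differentiable_on {a..b}" and ab: "a < b" and x: "x \<in> {a..b}" and t: "t \<in> {0..2*pi}"
  shows "norm (cross3 (vector_derivative (\<lambda>s'. revolution_surface f m k s' t) (at x within {a..b}))
                      (vector_derivative (\<lambda>t'. revolution_surface f m k x t') (at t within {0..2*pi})))
    = \<bar>f x - m * x - k\<bar> * sqrt ((1 + (vector_derivative f (at x within {a..b}))\<^sup>2) / (1 + m\<^sup>2))"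
proof -
  define p where "p = vector_derivative f (at x within {a..b})"
  define q where "q = 1 + m\<^sup>2"
  define r where "r = sqrt (1 + m\<^sup>2)"
  have q0: "q > 0" unfolding q_def by (smt (verit) zero_le_power2)
  have r0: "r > 0" unfolding r_def by (smt (verit) real_sqrt_gt_zero zero_le_power2)
  have rr: "r^2 = 1 + m^2" unfolding r_def by simp
  have "f differentiable (at x within {a..b})" using fd0 x by (simp add: differentiable_on_def)
  then have "(f has_vector_derivative p) (at x within {a..b})" unfolding p_def by (rule vector_derivative_works[THEN iffD1])
  then have fd: "(f has_real_derivative p) (at x within {a..b})"
    by (simp add: has_real_derivative_iff_has_vector_derivative)
  define Y where "Y = f x - k"
  have RS: "revolution_surface f m k = (\<lambda>x t. (cos t * x + (1 - cos t) * (x + m * (f x - k)) / q) *\<^sub>R E1 +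
    (k + cos t * (f x - k) + m * (1 - cos t) * (x + m * (f x - k)) / q) *\<^sub>R E2 +
    (sin t * (f x - k - m * x) / r) *\<^sub>R E3)"
    unfolding q_def r_def by (intro ext) (rule rs_eq)
  define a1 where "a1 = cos t + (1 - cos t) * (1 + m * p) / q"
  define a2 where "a2 = cos t * p + m * (1 - cos t) * (1 + m * p) / q"
  define a3 where "a3 = sin t * (p - m) / r"
  define b1 where "b1 = - sin t * x + sin t * (x + m * Y) / q"
  define b2 where "b2 = - sin t * Y + m * sin t * (x + m * Y) / q"
  define b3 where "b3 = cos t * (Y - m * x) / r"
  have D1: "((\<lambda>s'. revolution_surface f m k s' t) has_vector_derivative (a1 *\<^sub>R E1 + a2 *\<^sub>R E2 + a3 *\<^sub>R E3)) (at x within {a..b})"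
    unfolding RS
  proof (rule vd3)
    show "((\<lambda>x. cos t * x + (1 - cos t) * (x + m * (f x - k)) / q) has_real_derivative a1) (at x within {a..b})"
      unfolding a1_def using q0 r0 by (auto intro!: derivative_eq_intros fd simp: field_simps)
    show "((\<lambda>x. k + cos t * (f x - k) + m * (1 - cos t) * (x + m * (f x - k)) / q) has_real_derivative a2) (at x within {a..b})"
      unfolding a2_def using q0 r0 by (auto intro!: derivative_eq_intros fd simp: field_simps)
    show "((\<lambda>x. sin t * (f x - k - m * x) / r) has_real_derivative a3) (at x within {a..b})"
      unfolding a3_def using q0 r0 by (auto intro!: derivative_eq_intros fd simp: field_simps)
  qed
  have D2: "((\<lambda>t'. revolution_surface f m k x t') has_vector_derivative (b1 *\<^sub>R E1 + b2 *\<^sub>R E2 + b3 *\<^sub>R E3)) (at t within {0..2*pi})"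
    unfolding RS
  proof (rule vd3)
    show "((\<lambda>t. cos t * x + (1 - cos t) * (x + m * (f x - k)) / q) has_real_derivative b1) (at t within {0..2*pi})"
      unfolding b1_def Y_def using q0 r0 by (auto intro!: derivative_eq_intros simp: field_simps)
    show "((\<lambda>t. k + cos t * (f x - k) + m * (1 - cos t) * (x + m * (f x - k)) / q) has_real_derivative b2) (at t within {0..2*pi})"
      unfolding b2_def Y_def using q0 r0 by (auto intro!: derivative_eq_intros simp: field_simps)
    show "((\<lambda>t. sin t * (f x - k - m * x) / r) has_real_derivative b3) (at t within {0..2*pi})"
      unfolding b3_def Y_def using q0 r0 by (auto intro!: derivative_eq_intros simp: field_simps)
  qed
  have V1: "vector_derivative (\<lambda>s'. revolution_surface f m k s' t) (at x within {a..b}) = a1 *\<^sub>R E1 + a2 *\<^sub>R E2 + a3 *\<^sub>R E3"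
    by (rule vector_derivative_within_closed_interval[OF ab x D1])
  have V2: "vector_derivative (\<lambda>t'. revolution_surface f m k x t') (at t within {0..2*pi}) = b1 *\<^sub>R E1 + b2 *\<^sub>R E2 + b3 *\<^sub>R E3"
    by (rule vector_derivative_within_closed_interval[OF _ t D2]) simp
  have "norm (cross3 (a1 *\<^sub>R E1 + a2 *\<^sub>R E2 + a3 *\<^sub>R E3) (b1 *\<^sub>R E1 + b2 *\<^sub>R E2 + b3 *\<^sub>R E3))
      = sqrt ((Y - m*x)^2 * (1 + p^2) / (1 + m^2))"
    unfolding cross_E norm_E a1_def a2_def a3_def b1_def b2_def b3_def q_def
    by (subst key_alg[OF _ rr r0]) simp_all
  also have "\<dots> = \<bar>f x - m * x - k\<bar> * sqrt ((1 + p\<^sup>2) / (1 + m\<^sup>2))"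
  proof -
    have "(Y - m*x)^2 * (1 + p^2) / (1 + m^2) = (f x - m * x - k)^2 * ((1 + p\<^sup>2) / (1 + m\<^sup>2))"
      unfolding Y_def by (simp add: algebra_simps)
    then show ?thesis by (simp only: real_sqrt_mult real_sqrt_abs)
  qed
  finally show ?thesis unfolding V1 V2 p_def .
qed


lemma prod_integral:
  fixes g G :: "real \<Rightarrow> real"
  assumes G: "G \<in> borel_measurable borel" and G0: "\<And>x. 0 \<le> G x"
    and Gg: "\<And>x. x \<in> {a<..<b} \<Longrightarrow> G x = g x" and cd: "c < d"
  shows "integral ({a..b} \<times> {c..d}) (\<lambda>(s,t). g s) = (d - c) * integral {a..b} g"
proof -
  define F1 where "F1 x = indicator {a..b} x * G x" for x
  define F2 where "F2 z = indicator {a..b} (fst z) * G (fst z) * indicator {c..d} (snd z)" for z :: "real \<times> real"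
  have F1m[measurable]: "F1 \<in> borel_measurable borel" unfolding F1_def using G by measurable
  have "F2 \<in> borel_measurable (borel \<Otimes>\<^sub>M borel)" unfolding F2_def using G by measurable
  then have F2m[measurable]: "F2 \<in> borel_measurable borel" by (simp add: borel_prod)
  have F2m': "F2 \<in> borel_measurable (lborel \<Otimes>\<^sub>M lborel)" by (simp add: lborel_prod)
  have F10: "\<And>x. 0 \<le> F1 x" and F20: "\<And>z. 0 \<le> F2 z" unfolding F1_def F2_def using G0 by auto
  have I1: "integral {a..b} g = integral UNIV F1"
  proof -
    have "integral {a..b} g = integral {a..b} G"
      by (rule integral_spike[of "{a,b}"]) (auto simp: Gg)
    also have "\<dots> = integral UNIV (\<lambda>x. if x \<in> {a..b} then G x else 0)"
      by (rule integral_restrict_UNIV[symmetric])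
    also have "(\<lambda>x. if x \<in> {a..b} then G x else 0) = F1" by (auto simp: F1_def indicator_def)
    finally show ?thesis .
  qed
  have I2: "integral ({a..b} \<times> {c..d}) (\<lambda>(s,t). g s) = integral UNIV F2"
  proof -
    have neg: "negligible ({z. z \<bullet> (1,0) = a} \<union> {z :: real\<times>real. z \<bullet> (1,0) = b})"
      by (auto intro!: negligible_standard_hyperplane simp: Basis_prod_def)
    have "integral ({a..b} \<times> {c..d}) (\<lambda>(s,t). g s) = integral ({a..b} \<times> {c..d}) (\<lambda>z. G (fst z))"
      by (rule integral_spike[OF neg]) (auto simp: Gg)
    also have "\<dots> = integral UNIV (\<lambda>z. if z \<in> {a..b} \<times> {c..d} then G (fst z) else 0)"
      by (rule integral_restrict_UNIV[symmetric])
    also have "(\<lambda>z. if z \<in> {a..b} \<times> {c..d} then G (fst z) else 0) = F2" by (auto simp: F2_def indicator_def)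
    finally show ?thesis .
  qed
  have NN: "integral\<^sup>N lborel F2 = integral\<^sup>N lborel F1 * ennreal (d - c)"
  proof -
    have "integral\<^sup>N lborel F2 = integral\<^sup>N (lborel \<Otimes>\<^sub>M lborel) F2" by (simp add: lborel_prod)
    also have "\<dots> = (\<integral>\<^sup>+ x. \<integral>\<^sup>+ y. F2 (x, y) \<partial>lborel \<partial>lborel)"
      by (rule lborel.nn_integral_fst[symmetric]) (use F2m' in measurable)
    also have "\<dots> = (\<integral>\<^sup>+ x. ennreal (F1 x) * ennreal (d - c) \<partial>lborel)"
    proof (rule nn_integral_cong)
      fix x
      have "(\<integral>\<^sup>+ y. ennreal (F2 (x, y)) \<partial>lborel) = (\<integral>\<^sup>+ y. ennreal (F1 x) * indicator {c..d} y \<partial>lborel)"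
        by (rule nn_integral_cong) (auto simp: F2_def F1_def indicator_def)
      also have "\<dots> = ennreal (F1 x) * ennreal (d - c)"
        using cd by (subst nn_integral_cmult_indicator) auto
      finally show "(\<integral>\<^sup>+ y. ennreal (F2 (x, y)) \<partial>lborel) = ennreal (F1 x) * ennreal (d - c)" .
    qed
    also have "\<dots> = integral\<^sup>N lborel F1 * ennreal (d - c)"
      by (rule nn_integral_multc) simp
    finally show ?thesis .
  qed
  show ?thesis
  proof (cases "integral\<^sup>N lborel F1 < \<infinity>")
    case True
    then obtain r where r: "integral\<^sup>N lborel F1 = ennreal r" "0 \<le> r"
      using True by (cases "integral\<^sup>N lborel F1") auto
    have h1: "(F1 has_integral r) UNIV" by (rule nn_integral_has_integral[OF F1m F10 r])
    have rr: "integral\<^sup>N lborel F2 = ennreal (r * (d - c))"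
      unfolding NN r(1) using r(2) cd by (simp add: ennreal_mult)
    have h2: "(F2 has_integral r * (d - c)) UNIV"
      by (rule nn_integral_has_integral[OF F2m F20 rr]) (use r(2) cd in simp)
    show ?thesis unfolding I1 I2 using integral_unique[OF h1] integral_unique[OF h2] by simp
  next
    case False
    then have inf: "integral\<^sup>N lborel F1 = \<infinity>" using False by (simp add: less_top[symmetric])
    have n1: "\<not> F1 integrable_on UNIV"
    proof
      assume "F1 integrable_on UNIV"
      then have "integral\<^sup>N lborel F1 = ennreal (integral UNIV F1)"
        using nn_integral_has_integral_lborel[OF F1m F10] integrable_integral by blast
      then show False using inf by simp
    qed
    have inf2: "integral\<^sup>N lborel F2 = \<infinity>"
      unfolding NN inf using cd by (simp add: ennreal_top_mult)
    have n2: "\<not> F2 integrable_on UNIV"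
    proof
      assume "F2 integrable_on UNIV"
      then have "integral\<^sup>N lborel F2 = ennreal (integral UNIV F2)"
        using nn_integral_has_integral_lborel[OF F2m F20] integrable_integral by blast
      then show False using inf2 by simp
    qed
    show ?thesis unfolding I1 I2 using n1 n2 by (simp add: not_integrable_integral)
  qed
qed


lemma borel_version:
  fixes f :: "real \<Rightarrow> real"
  assumes fd0: "f differentiable_on {a..b}" and ab: "a < b"
  obtains G where "G \<in> borel_measurable borel" "\<And>x. 0 \<le> G x"
    "\<And>x. x \<in> {a<..<b} \<Longrightarrow> G x = \<bar>f x - m * x - k\<bar> *
           sqrt ((1 + (vector_derivative f (at x within {a..b}))\<^sup>2) / (1 + m\<^sup>2))"
proof -
  define ft where "ft x = f (max a (min b x))" for x
  have "continuous_on {a..b} f" using fd0 by (rule differentiable_imp_continuous_on)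
  then have "continuous_on UNIV ft" unfolding ft_def
    by (rule continuous_on_compose2[of "{a..b}" f UNIV "\<lambda>x. max a (min b x)"]) (use ab in \<open>auto intro!: continuous_intros\<close>)
  then have ftm[measurable]: "ft \<in> borel_measurable borel" by (rule borel_measurable_continuous_onI)
  define h where "h n = inverse (real (Suc n))" for n
  define D where "D x = lim (\<lambda>n. (ft (x + h n) - ft x) / h n)" for x
  define G where "G x = \<bar>ft x - m * x - k\<bar> * sqrt ((1 + (D x)\<^sup>2) / (1 + m\<^sup>2))" for x
  have "G \<in> borel_measurable borel" unfolding G_def D_def by measurable
  moreover have "\<And>x. 0 \<le> G x" unfolding G_def by (auto intro!: mult_nonneg_nonneg)
  moreover have "G x = \<bar>f x - m * x - k\<bar> *
           sqrt ((1 + (vector_derivative f (at x within {a..b}))\<^sup>2) / (1 + m\<^sup>2))" if x: "x \<in> {a<..<b}" for x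
  proof -
    define p where "p = vector_derivative f (at x within {a..b})"
    have xab: "x \<in> {a..b}" using x by auto
    have "f differentiable (at x within {a..b})" using fd0 xab by (simp add: differentiable_on_def)
    then have "(f has_vector_derivative p) (at x within {a..b})" unfolding p_def by (rule vector_derivative_works[THEN iffD1])
    then have "(f has_real_derivative p) (at x within {a..b})"
      by (simp add: has_real_derivative_iff_has_vector_derivative)
    moreover have "at x within {a..b} = at x" by (rule at_within_interior) (use x in simp)
    ultimately have "(f has_real_derivative p) (at x)" by simp
    then have "(ft has_real_derivative p) (at x)"
      by (rule has_field_derivative_transform_within_open[of _ _ _ "{a<..<b}"]) (use x in \<open>auto simp: ft_def\<close>)
    then have lim1: "((\<lambda>y. (ft y - ft x) / (y - x)) \<longlongrightarrow> p) (at x)" by (simp add: has_field_derivative_iff)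
    have hx: "filterlim (\<lambda>n. x + h n) (at x) sequentially"
      unfolding filterlim_at
    proof
      show "\<forall>\<^sub>F n in sequentially. x + h n \<in> UNIV \<and> x + h n \<noteq> x" by (auto simp: h_def)
      show "((\<lambda>n. x + h n) \<longlongrightarrow> x) sequentially"
        using tendsto_add[OF tendsto_const LIMSEQ_inverse_real_of_nat, of x] by (simp add: h_def)
    qed
    have "(\<lambda>n. (ft (x + h n) - ft x) / h n) \<longlonglongrightarrow> p"
      using filterlim_compose[OF lim1 hx] by simp
    then have "D x = p" unfolding D_def by (rule limI)
    moreover have "ft x = f x" using xab by (simp add: ft_def)
    ultimately show ?thesis unfolding G_def p_def by simp
  qed
  ultimately show ?thesis using that by blast
qed

theorem mainTheorem2:
  fixes f :: "real \<Rightarrow> real" and a b m k :: real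
  assumes "f differentiable_on {a..b}"
  shows "param_surface_area (revolution_surface f m k) a b 0 (2 * pi) =
    2 * pi * integral {a..b}
      (\<lambda>x. \<bar>f x - m * x - k\<bar> *
           sqrt ((1 + (vector_derivative f (at x within {a..b}))\<^sup>2) / (1 + m\<^sup>2)))"
proof (cases "a < b")
  case True
  define g where "g x = \<bar>f x - m * x - k\<bar> *
           sqrt ((1 + (vector_derivative f (at x within {a..b}))\<^sup>2) / (1 + m\<^sup>2))" for x
  obtain G where G: "G \<in> borel_measurable borel" "\<And>x. 0 \<le> G x"
    "\<And>x. x \<in> {a<..<b} \<Longrightarrow> G x = g x"
    using borel_version[OF assms True, of m k] unfolding g_def by blast
  have "param_surface_area (revolution_surface f m k) a b 0 (2 * pi)
      = integral ({a..b} \<times> {0..2*pi}) (\<lambda>(s,t). g s)"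
    unfolding param_surface_area_def
  proof (rule integral_cong)
    fix z assume "z \<in> {a..b} \<times> {0..2*pi}"
    then obtain s t where z: "z = (s,t)" "s \<in> {a..b}" "t \<in> {0..2*pi}" by auto
    show "(case z of (s, t) \<Rightarrow> norm (cross3 (vector_derivative (\<lambda>s'. revolution_surface f m k s' t) (at s within {a..b}))
              (vector_derivative (\<lambda>t'. revolution_surface f m k s t') (at t within {0..2 * pi})))) =
          (case z of (s, t) \<Rightarrow> g s)"
      unfolding z(1) g_def using integrand[OF assms True z(2) z(3)] by simp
  qed
  also have "\<dots> = (2 * pi - 0) * integral {a..b} g"
    using prod_integral[where a=a and b=b and c=0 and d="2*pi" and g=g and G=G, OF G] pi_gt_zero by simp
  finally show ?thesis unfolding g_def by simp
next
  case False
  show ?thesis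
  proof (cases "a = b")
    case True
    have c1: "measure lborel (cbox (a,0) (b, 2*pi)) = 0" using True by (simp add: content_Pair)
    have "param_surface_area (revolution_surface f m k) a b 0 (2 * pi) = 0"
      unfolding param_surface_area_def using integral_null[OF c1] by (simp add: cbox_Pair_eq)
    moreover have "integral {a..b} (\<lambda>x. \<bar>f x - m * x - k\<bar> *
           sqrt ((1 + (vector_derivative f (at x within {a..b}))\<^sup>2) / (1 + m\<^sup>2))) = 0"
      using True by simp
    ultimately show ?thesis by simp
  next
    case False
    then have e: "{a..b} = {}" using \<open>\<not> a < b\<close> by auto
    show ?thesis unfolding param_surface_area_def e by simp
  qed
qed

end
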